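(* Let $a>1$ and $b>1$ be irrational numbers, and let $a_n=[an]$ and $b_n=[bn]$ for positive integers $n$. Then $$\lim_{k \to \infty}\frac{1}{k} \sum_{n=1}^\infty \left(\frac{a_{n+k}}{a_n}-\frac{b_{n+k}}{b_n}\right) + \sum_{n=1}^{\infty}\frac{a \{a^{-1} (n+1)\}-b\{b^{-1}(n+1)\}}{n(n+1)}= \log\frac{a}{b}.$$
   Context: For a real number $x$, $[x]$ denotes the greatest integer not exceeding $x$ and $\{x\}=x-[x]$ its fractional part. Here $k$ ranges over positive integers. *)

theory Defs
  imports Complex_Main
begin

definition beatty :: "real \<Rightarrow> nat \<Rightarrow> real" where
  "beatty x n = real_of_int \<lfloor>x * real n\<rfloor>"

definition ratio_term :: "real \<Rightarrow> real \<Rightarrow> nat \<Rightarrow> nat \<Rightarrow> real" where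
  "ratio_term a b k n = beatty a (n + k) / beatty a n - beatty b (n + k) / beatty b n"

definition frac_term :: "real \<Rightarrow> real \<Rightarrow> nat \<Rightarrow> real" where
  "frac_term a b n = (a * frac (real (n + 1) / a) - b * frac (real (n + 1) / b))
                     / (real n * real (n + 1))"

end

theory Submission
  imports Defs "HOL-Analysis.Harmonic_Numbers" "HOL-Real_Asymp.Real_Asymp"
begin

lemma aux_frac:
  fixes p q x2 :: real
  assumes h: "p > 0" "q > 0" "q = p + 1"
  shows "x2 / (p * q) + x2 / q = x2 / p"
proof -
  have "x2 / (p * q) + x2 / q = (x2 + x2 * p) / (p * q)" using h(1,2) by (simp add: field_simps)
  also have "x2 + x2 * p = x2 * q" using h by (simp add: algebra_simps)
  also have "x2 * q / (p * q) = x2 / p" using h by simp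
  finally show ?thesis .
qed

lemma aux_ident:
  fixes X Y nn kk a G2 :: real
  assumes "X > 0" "nn > 0"
  shows "Y / X - (nn + kk) / nn = kk * (a / X - 1 / nn) + ((a * nn / X - 1) - G2) + (G2 - (a * (nn + kk) - Y) / X)"
  using assms by (simp add: field_simps)

lemma aux_bound:
  fixes f d c P Q :: real
  assumes "0 \<le> f" "f \<le> 1" "0 \<le> d" "d \<le> c" "0 < P" "P \<le> Q"
  shows "f * d / Q \<le> c / P"
proof -
  have "f * d \<le> c" using assms by (metis mult_le_one mult_right_mono order_trans mult_1 mult.commute)
  then have "f * d / Q \<le> c / Q" using assms by (intro divide_right_mono) auto
  also have "c / Q \<le> c / P" using assms by (intro divide_left_mono) auto
  finally show ?thesis .
qed

lemma shift_telescope: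
  fixes g :: "nat \<Rightarrow> real"
  assumes "g \<longlonglongrightarrow> 0"
  shows "(\<lambda>n. g n - g (n + k)) sums (\<Sum>i<k. g i)"
proof -
  have ps: "(\<Sum>n<N. g n - g (n + k)) = (\<Sum>i<k. g i) - (\<Sum>i<k. g (N + i))" for N
  proof (induction N)
    case 0 then show ?case by simp
  next
    case (Suc N)
    have "(\<Sum>i<k. g (N + Suc i) - g (N + i)) = g (N + k) - g (N + 0)"
      by (rule sum_lessThan_telescope)
    then have "(\<Sum>i<k. g (Suc N + i)) - (\<Sum>i<k. g (N + i)) = g (N + k) - g N"
      by (simp add: sum_subtractf)
    with Suc show ?case by (simp add: add.commute)
  qed
  have "(\<lambda>N. \<Sum>i<k. g (N + i)) \<longlonglongrightarrow> (\<Sum>i<k. (0::real))"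
    apply (rule tendsto_sum)
    using LIMSEQ_ignore_initial_segment[OF assms] by (simp add: add.commute)
  then have "(\<lambda>N. (\<Sum>i<k. g i) - (\<Sum>i<k. g (N + i))) \<longlonglongrightarrow> (\<Sum>i<k. g i) - 0"
    by (intro tendsto_diff) auto
  then show ?thesis unfolding sums_def ps by simp
qed

context
  fixes a :: real
  assumes a1: "a > 1"
begin

lemma beatty_ge: "real n \<le> beatty a n"
proof -
  have "real n \<le> a * real n" using a1 by (simp add: mult_le_cancel_right1)
  then have "\<lfloor>real n\<rfloor> \<le> \<lfloor>a * real n\<rfloor>" by (rule floor_mono)
  then show ?thesis unfolding beatty_def by simp
qed

lemma beatty_le: "beatty a n \<le> a * real n"
  unfolding beatty_def by simp

lemma beatty_gt: "a * real n - 1 < beatty a n"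
  unfolding beatty_def by linarith

lemma beatty_pos: "n \<ge> 1 \<Longrightarrow> beatty a n > 0"
  using beatty_ge[of n] by simp

lemma harm_over_n: "(\<lambda>k. harm k / real k) \<longlonglongrightarrow> (0::real)"
proof -
  have "(\<lambda>k. (harm k - ln (real k)) * (1 / real k) + ln (real k) / real k) \<longlonglongrightarrow> euler_mascheroni * 0 + 0"
    by (intro tendsto_add tendsto_mult euler_mascheroni_LIMSEQ) real_asymp+
  moreover have "(harm k - ln (real k)) * (1 / real k) + ln (real k) / real k = harm k / real k" for k
    by (simp add: diff_divide_distrib)
  ultimately show ?thesis by simp
qed


definition Bn :: "nat \<Rightarrow> nat" where "Bn N = nat \<lfloor>a * real N\<rfloor>"

lemma beatty_Bn: "beatty a N = real (Bn N)"
  unfolding Bn_def beatty_def using beatty_ge[of N] unfolding beatty_def by simp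

lemma Bn_0: "Bn 0 = 0" unfolding Bn_def by simp

lemma Bn_ge: "N \<le> Bn N" using beatty_ge[of N] beatty_Bn[of N] by simp

lemma Bn_less: "Bn N < Bn (Suc N)"
proof -
  have "a * real N + 1 \<le> a * real (Suc N)" using a1 by (simp add: algebra_simps)
  then have "\<lfloor>a * real N + 1\<rfloor> \<le> \<lfloor>a * real (Suc N)\<rfloor>" by (rule floor_mono)
  then have "beatty a N + 1 \<le> beatty a (Suc N)" unfolding beatty_def by simp
  then show ?thesis unfolding beatty_Bn by simp
qed

lemma Bn_strict_mono: "strict_mono Bn"
  using Bn_less by (simp add: strict_mono_Suc_iff)

lemma floor_Bn:
  assumes irr: "a \<notin> \<rat>" and m1: "Bn N \<le> m" and m2: "m < Bn (Suc N)"
  shows "\<lfloor>real (m + 1) / a\<rfloor> = int N"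
proof -
  have "beatty a N \<le> real m" using m1 beatty_Bn[of N] by simp
  then have "a * real N < real m + 1" unfolding beatty_def by linarith
  then have l: "real N < (real m + 1) / a" using a1 by (simp add: field_simps)
  have "real m + 1 \<le> beatty a (Suc N)" using m2 beatty_Bn[of "Suc N"] by simp
  then have "real m + 1 \<le> a * real (Suc N)" using beatty_le[of "Suc N"] by linarith
  moreover have "real m + 1 \<noteq> a * real (Suc N)"
  proof
    assume "real m + 1 = a * real (Suc N)"
    then have "a = (real m + 1) / real (Suc N)" by (simp add: field_simps)
    then have "a \<in> \<rat>" by simp
    with irr show False by simp
  qed
  ultimately have "real m + 1 < a * real (Suc N)" by simp
  then have u: "(real m + 1) / a < real N + 1" using a1 by (simp add: field_simps)
  have e: "real (m + 1) = real m + 1" by simp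
  show ?thesis unfolding e by (rule floor_unique) (use l u in auto)
qed

definition chi :: "nat \<Rightarrow> real" where
  "chi m = real_of_int \<lfloor>real (m + 1) / a\<rfloor> - real_of_int \<lfloor>real m / a\<rfloor>"

lemma block_sum:
  assumes irr: "a \<notin> \<rat>"
  shows "(\<Sum>m\<in>{Bn N<..Bn (Suc N)}. chi m / real m) = 1 / real (Bn (Suc N))"
proof -
  have z: "chi m = 0" if "Bn N < m" "m < Bn (Suc N)" for m
  proof -
    have "\<lfloor>real (m + 1) / a\<rfloor> = int N" using floor_Bn[OF irr] that by simp
    moreover have "\<lfloor>real ((m - 1) + 1) / a\<rfloor> = int N" using floor_Bn[OF irr, of N "m - 1"] that by simp
    moreover have "real ((m - 1) + 1) = real m" using that by simp
    ultimately show ?thesis unfolding chi_def by simp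
  qed
  have o: "chi (Bn (Suc N)) = 1"
  proof -
    have "\<lfloor>real (Bn (Suc N) + 1) / a\<rfloor> = int (Suc N)"
      using floor_Bn[OF irr, of "Suc N" "Bn (Suc N)"] Bn_less[of "Suc N"] by simp
    moreover have "\<lfloor>real ((Bn (Suc N) - 1) + 1) / a\<rfloor> = int N"
      using floor_Bn[OF irr, of N "Bn (Suc N) - 1"] Bn_less[of N] by simp
    moreover have "real ((Bn (Suc N) - 1) + 1) = real (Bn (Suc N))" using Bn_less[of N] by simp
    ultimately show ?thesis unfolding chi_def by simp
  qed
  have e: "{Bn N<..Bn (Suc N)} = insert (Bn (Suc N)) {Bn N<..<Bn (Suc N)}"
    using Bn_less[of N] by auto
  have "(\<Sum>m\<in>{Bn N<..<Bn (Suc N)}. chi m / real m) = 0"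
    by (rule sum.neutral) (use z in auto)
  then show ?thesis unfolding e using o by simp
qed

lemma beatty_sum:
  assumes irr: "a \<notin> \<rat>"
  shows "(\<Sum>n\<in>{1..N}. 1 / beatty a n) = (\<Sum>m\<in>{1..Bn N}. chi m / real m)"
proof (induction N)
  case 0 then show ?case by (simp add: Bn_0)
next
  case (Suc N)
  have e: "{1..Bn (Suc N)} = {1..Bn N} \<union> {Bn N<..Bn (Suc N)}" using Bn_less[of N] by auto
  have "(\<Sum>m\<in>{1..Bn (Suc N)}. chi m / real m)
        = (\<Sum>m\<in>{1..Bn N}. chi m / real m) + (\<Sum>m\<in>{Bn N<..Bn (Suc N)}. chi m / real m)"
    unfolding e by (rule sum.union_disjoint) auto
  also have "\<dots> = (\<Sum>n\<in>{1..N}. 1 / beatty a n) + 1 / beatty a (Suc N)"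
    using Suc block_sum[OF irr, of N] beatty_Bn[of "Suc N"] by simp
  finally show ?case by simp
qed

lemma chi_sum:
  "(\<Sum>m\<in>{1..M}. chi m / real m) = harm M / a
     - (\<Sum>m\<in>{1..M}. frac (real (m + 1) / a) / (real m * real (m + 1)))
     + real_of_int \<lfloor>real (M + 1) / a\<rfloor> / real (M + 1)"
proof (induction M)
  case 0
  have "\<lfloor>1 / a\<rfloor> = 0" using a1 by (simp add: floor_eq_iff)
  then show ?case by (simp add: harm_def)
next
  case (Suc M)
  define x1 where "x1 = real_of_int \<lfloor>real (M + 1) / a\<rfloor>"
  define x2 where "x2 = real_of_int \<lfloor>real (M + 2) / a\<rfloor>"
  have fr: "frac (real (Suc M + 1) / a) = real (M + 2) / a - x2"
    unfolding frac_def x2_def by simp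
  have ch: "chi (Suc M) = x2 - x1" unfolding chi_def x1_def x2_def by simp
  have an: "a \<noteq> 0" using a1 by simp
  have gen: "\<And>p::real. p > 0 \<Longrightarrow> (x2 - x1) / p = 1 / (a * p) - ((p + 1) / a - x2) / (p * (p + 1)) + x2 / (p + 1) - x1 / p"
  proof -
    fix p :: real assume "p > 0"
    then have "p \<noteq> 0" "p + 1 \<noteq> 0" by auto
    then have p1: "p + 1 > 0" using \<open>p > 0\<close> by simp
    have s1: "((p + 1) / a - x2) / (p * (p + 1)) = 1 / (a * p) - x2 / (p * (p + 1))"
      using an \<open>p \<noteq> 0\<close> p1 by (simp add: diff_divide_distrib)
    have s2: "x2 / (p * (p + 1)) + x2 / (p + 1) = x2 / p"
      by (rule aux_frac[OF \<open>p > 0\<close> p1 refl])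
    show "(x2 - x1) / p = 1 / (a * p) - ((p + 1) / a - x2) / (p * (p + 1)) + x2 / (p + 1) - x1 / p"
      unfolding s1 using s2 by (simp add: diff_divide_distrib)
  qed
  define p where "p = real (Suc M)"
  define q where "q = real (Suc (Suc M))"
  have pq: "q = p + 1" unfolding p_def q_def by simp
  have pp: "p > 0" unfolding p_def by simp
  have key: "(x2 - x1) / p = 1 / (a * p) - (q / a - x2) / (p * q) + x2 / q - x1 / p"
    using gen[OF pp] unfolding pq .
  have L: "(\<Sum>m\<in>{1..Suc M}. chi m / real m) = (\<Sum>m\<in>{1..M}. chi m / real m) + (x2 - x1) / p"
    unfolding p_def ch[symmetric] by (simp add: sum.cl_ivl_Suc)
  have R1: "harm (Suc M) / a = harm M / a + 1 / (a * p)"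
    unfolding harm_Suc p_def[symmetric] using an pp by (simp add: field_simps)
  have R2: "(\<Sum>m\<in>{1..Suc M}. frac (real (m + 1) / a) / (real m * real (m + 1)))
     = (\<Sum>m\<in>{1..M}. frac (real (m + 1) / a) / (real m * real (m + 1))) + (q / a - x2) / (p * q)"
  proof -
    have "frac (real (Suc M + 1) / a) = q / a - x2" unfolding fr q_def by simp
    moreover have "real (Suc M) * real (Suc M + 1) = p * q" unfolding p_def q_def by simp
    ultimately show ?thesis by (simp add: sum.cl_ivl_Suc del: of_nat_Suc)
  qed
  have R3: "real_of_int \<lfloor>real (Suc M + 1) / a\<rfloor> / real (Suc M + 1) = x2 / q"
    unfolding x2_def q_def by simp
  have I1: "real_of_int \<lfloor>real (M + 1) / a\<rfloor> / real (M + 1) = x1 / p"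
    unfolding x1_def p_def by simp
  show ?case unfolding L R1 R2 R3 using Suc key I1 by linarith
qed


definition fa :: "nat \<Rightarrow> real" where
  "fa n = a * frac (real (n + 1 + 1) / a) / (real (n + 1) * real (n + 1 + 1))"

lemma inv_tel: "(\<lambda>n. 1 / real (n + 1) - 1 / real (n + 1 + k)) sums (\<Sum>i<k. 1 / real (i + 1))"
proof -
  have "(\<lambda>n. 1 / real (n + 1)) \<longlonglongrightarrow> 0"
    using LIMSEQ_Suc[OF lim_inverse_n'] by simp
  from shift_telescope[OF this, of k] show ?thesis by (simp add: add_ac)
qed

lemma fa_summable: "summable fa"
proof -
  have s: "summable (\<lambda>n. a * (1 / real (n + 1) - 1 / real (n + 1 + 1)))"
    using inv_tel[of 1] by (intro summable_mult) (auto simp: sums_iff)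
  show ?thesis
  proof (rule summable_comparison_test'[OF s])
    fix n :: nat
    have e: "1 / real (n + 1) - 1 / real (n + 1 + 1) = 1 / (real (n + 1) * real (n + 1 + 1))"
      by (simp add: field_simps)
    have "norm (fa n) = a * frac (real (n + 1 + 1) / a) / (real (n + 1) * real (n + 1 + 1))"
      unfolding fa_def using a1 by simp
    also have "\<dots> \<le> a * 1 / (real (n + 1) * real (n + 1 + 1))"
      using a1 frac_lt_1[of "real (n + 1 + 1) / a"]
      by (intro divide_right_mono mult_left_mono) auto
    finally show "norm (fa n) \<le> a * (1 / real (n + 1) - 1 / real (n + 1 + 1))"
      unfolding e by simp
  qed
qed

definition FP :: "nat \<Rightarrow> real" where
  "FP M = (\<Sum>m\<in>{1..M}. frac (real (m + 1) / a) / (real m * real (m + 1)))"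

lemma FP_lim: "(\<lambda>M. a * FP M) \<longlonglongrightarrow> suminf fa"
proof -
  have "a * FP M = (\<Sum>n<M. fa n)" for M
    unfolding FP_def fa_def sum_distrib_left
    using sum.atLeast1_atMost_eq[of "\<lambda>m. a * (frac (real (m + 1) / a) / (real m * real (m + 1)))" M]
    by (simp add: add_ac)
  then show ?thesis using summable_LIMSEQ[OF fa_summable] by simp
qed

lemma Bn_ratio: "(\<lambda>N. real (Bn N) / real N) \<longlonglongrightarrow> a"
proof (rule tendsto_sandwich)
  show "eventually (\<lambda>N. a - 1 / real N \<le> real (Bn N) / real N) sequentially"
  proof (rule eventually_sequentiallyI[of 1])
    fix N :: nat assume "N \<ge> 1"
    then have Np: "real N > 0" by simp
    have "a * real N - 1 \<le> real (Bn N)" using beatty_gt[of N] beatty_Bn[of N] by simp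
    then have "(a * real N - 1) / real N \<le> real (Bn N) / real N" using Np by (intro divide_right_mono) auto
    moreover have "(a * real N - 1) / real N = a - 1 / real N" using Np by (simp add: field_simps)
    ultimately show "a - 1 / real N \<le> real (Bn N) / real N" by simp
  qed
  show "eventually (\<lambda>N. real (Bn N) / real N \<le> a) sequentially"
  proof (rule eventually_sequentiallyI[of 1])
    fix N :: nat assume "N \<ge> 1"
    then have Np: "real N > 0" by simp
    have "real (Bn N) \<le> a * real N" using beatty_le[of N] beatty_Bn[of N] by simp
    then show "real (Bn N) / real N \<le> a" using Np by (simp add: field_simps)
  qed
  show "(\<lambda>N. a - 1 / real N) \<longlonglongrightarrow> a" using tendsto_diff[OF tendsto_const lim_inverse_n', of a] by simp
  show "(\<lambda>N. a) \<longlonglongrightarrow> a" by simp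
qed

lemma D_sums:
  assumes irr: "a \<notin> \<rat>"
  shows "(\<lambda>n. a / beatty a (n + 1) - 1 / real (n + 1)) sums (ln a + 1 - suminf fa)"
proof -
  have ps: "(\<Sum>n<N. a / beatty a (n + 1) - 1 / real (n + 1))
      = (harm (Bn N) - ln (real (Bn N))) - (harm N - ln (real N)) + ln (real (Bn N) / real N)
        - a * FP (Bn N) + a / (real (Bn N) / real N + 1 / real N)" if N1: "N \<ge> 1" for N
  proof -
    have Np: "real N > 0" using N1 by simp
    have Bp: "real (Bn N) > 0" using Bn_ge[of N] N1 by simp
    have "(\<Sum>n<N. a / beatty a (n + 1) - 1 / real (n + 1))
        = (\<Sum>n\<in>{1..N}. a / beatty a n - 1 / real n)"
      using sum.atLeast1_atMost_eq[of "\<lambda>n. a / beatty a n - 1 / real n" N] by simp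
    also have "\<dots> = a * (\<Sum>n\<in>{1..N}. 1 / beatty a n) - harm N"
      unfolding sum_subtractf harm_def sum_distrib_left by (simp add: divide_inverse)
    also have "\<dots> = a * (harm (Bn N) / a - FP (Bn N) + real N / real (Bn N + 1)) - harm N"
      unfolding beatty_sum[OF irr] chi_sum FP_def using floor_Bn[OF irr, of N "Bn N"] Bn_less[of N]
      by simp
    also have "\<dots> = harm (Bn N) - harm N - a * FP (Bn N) + a * real N / real (Bn N + 1)"
      using a1 by (simp add: algebra_simps)
    also have "a * real N / real (Bn N + 1) = a / (real (Bn N) / real N + 1 / real N)"
      using Np by (simp add: field_simps)
    also have "harm (Bn N) - harm N = (harm (Bn N) - ln (real (Bn N))) - (harm N - ln (real N)) + ln (real (Bn N) / real N)"
      using Np Bp by (simp add: ln_div)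
    finally show ?thesis .
  qed
  have l1: "(\<lambda>N. harm (Bn N) - ln (real (Bn N))) \<longlonglongrightarrow> euler_mascheroni"
    using LIMSEQ_subseq_LIMSEQ[OF euler_mascheroni_LIMSEQ Bn_strict_mono] by (simp add: o_def)
  have l2: "(\<lambda>N. ln (real (Bn N) / real N)) \<longlonglongrightarrow> ln a"
    using a1 by (intro tendsto_ln Bn_ratio) auto
  have l3: "(\<lambda>N. a * FP (Bn N)) \<longlonglongrightarrow> suminf fa"
    using LIMSEQ_subseq_LIMSEQ[OF FP_lim Bn_strict_mono] by (simp add: o_def)
  have l4: "(\<lambda>N. a / (real (Bn N) / real N + 1 / real N)) \<longlonglongrightarrow> a / (a + 0)"
    using a1 by (intro tendsto_divide tendsto_const tendsto_add Bn_ratio lim_inverse_n') auto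
  have "(\<lambda>N. (harm (Bn N) - ln (real (Bn N))) - (harm N - ln (real N)) + ln (real (Bn N) / real N)
        - a * FP (Bn N) + a / (real (Bn N) / real N + 1 / real N))
        \<longlonglongrightarrow> euler_mascheroni - euler_mascheroni + ln a - suminf fa + a / (a + 0)"
    by (intro tendsto_add tendsto_diff l1 l2 l3 l4 euler_mascheroni_LIMSEQ)
  moreover have "euler_mascheroni - euler_mascheroni + ln a - suminf fa + a / (a + 0) = ln a + 1 - suminf fa"
    using a1 by simp
  ultimately have "(\<lambda>N. (harm (Bn N) - ln (real (Bn N))) - (harm N - ln (real N)) + ln (real (Bn N) / real N)
        - a * FP (Bn N) + a / (real (Bn N) / real N + 1 / real N)) \<longlonglongrightarrow> ln a + 1 - suminf fa"
    by (metis (no_types, lifting))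
  then have "(\<lambda>N. \<Sum>n<N. a / beatty a (n + 1) - 1 / real (n + 1)) \<longlonglongrightarrow> ln a + 1 - suminf fa"
    by (rule Lim_transform_eventually) (use ps in \<open>auto intro!: eventually_sequentiallyI[of 1]\<close>)
  then show ?thesis unfolding sums_def .
qed


definition tt :: "nat \<Rightarrow> nat \<Rightarrow> real" where
  "tt k n = beatty a (n + k) / beatty a n - real (n + k) / real n"

definition GG :: "nat \<Rightarrow> real" where
  "GG n = a * real n / beatty a n - 1"

definition hh :: "nat \<Rightarrow> nat \<Rightarrow> real" where
  "hh k n = GG (n + k) - (a * real (n + k) - beatty a (n + k)) / beatty a n"

lemma tt_split:
  assumes "n \<ge> 1"
  shows "tt k n = real k * (a / beatty a n - 1 / real n) + (GG n - GG (n + k)) + hh k n"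
proof -
  have "real (n + k) = real n + real k" by simp
  then show ?thesis unfolding tt_def hh_def GG_def
    using aux_ident[of "beatty a n" "real n" "beatty a (n + k)" "real k" a "GG (n + k)"] beatty_pos[OF assms] assms
    by (simp add: GG_def)
qed

lemma GG_bounds:
  assumes "n \<ge> 1"
  shows "0 \<le> GG n" "GG n \<le> 1 / real n"
proof -
  have A: "beatty a n > 0" using beatty_pos[OF assms] .
  have e: "GG n = (a * real n - beatty a n) / beatty a n" unfolding GG_def using A by (simp add: field_simps)
  show "0 \<le> GG n" unfolding e using A beatty_le[of n] by simp
  have "(a * real n - beatty a n) / beatty a n \<le> 1 / beatty a n"
    using A beatty_gt[of n] by (intro divide_right_mono) auto
  also have "\<dots> \<le> 1 / real n" using beatty_ge[of n] assms by (intro divide_left_mono) auto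
  finally show "GG n \<le> 1 / real n" unfolding e .
qed

lemma GG_lim: "(\<lambda>n. GG (n + 1)) \<longlonglongrightarrow> 0"
proof (rule tendsto_sandwich)
  show "eventually (\<lambda>n. 0 \<le> GG (n + 1)) sequentially" using GG_bounds(1) by simp
  show "eventually (\<lambda>n. GG (n + 1) \<le> 1 / real (n + 1)) sequentially"
  proof (rule always_eventually, rule allI)
    fix n show "GG (n + 1) \<le> 1 / real (n + 1)" using GG_bounds(2)[of "n + 1"] by simp
  qed
  show "(\<lambda>n. 0::real) \<longlonglongrightarrow> 0" by simp
  show "(\<lambda>n. 1 / real (n + 1)) \<longlonglongrightarrow> 0" using LIMSEQ_Suc[OF lim_inverse_n'] by simp
qed

lemma hh_bound:
  assumes "n \<ge> 1"
  shows "\<bar>hh k n\<bar> \<le> (a * real k + 1) / (real n * real (n + k))"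
proof -
  define A1 where "A1 = beatty a n"
  define A2 where "A2 = beatty a (n + k)"
  define f where "f = a * real (n + k) - A2"
  have A1p: "A1 > 0" unfolding A1_def using beatty_pos[OF assms] .
  have A2p: "A2 > 0" unfolding A2_def using beatty_pos[of "n + k"] assms by simp
  have GG2: "GG (n + k) = f / A2" unfolding GG_def f_def A2_def using A2p[unfolded A2_def] by (simp add: field_simps)
  have e: "hh k n = - (f * (A2 - A1) / (A1 * A2))"
    unfolding hh_def GG2 unfolding f_def[symmetric] A1_def[symmetric] A2_def[symmetric]
    using A1p A2p by (simp add: field_simps)
  have "a * real n \<le> a * real (n + k)" using a1 by (intro mult_left_mono) auto
  then have "\<lfloor>a * real n\<rfloor> \<le> \<lfloor>a * real (n + k)\<rfloor>" by (rule floor_mono)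
  then have mono: "A1 \<le> A2" unfolding A1_def A2_def beatty_def by simp
  have f0: "0 \<le> f" "f \<le> 1" unfolding f_def A2_def using beatty_le[of "n + k"] beatty_gt[of "n + k"] by auto
  have d: "A2 - A1 \<le> a * real k + 1" unfolding A1_def A2_def
    using beatty_le[of "n + k"] beatty_gt[of n] by (simp add: algebra_simps)
  have PQ: "real n * real (n + k) \<le> A1 * A2" unfolding A1_def A2_def
    using beatty_ge[of n] beatty_ge[of "n + k"] by (intro mult_mono) auto
  have "\<bar>hh k n\<bar> = f * (A2 - A1) / (A1 * A2)" unfolding e using f0 mono A1p A2p by simp
  also have "\<dots> \<le> (a * real k + 1) / (real n * real (n + k))"
    using f0 mono d PQ assms by (intro aux_bound) auto
  finally show ?thesis .
qed

lemma hh_summable_bound: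
  assumes k1: "k \<ge> 1"
  shows "summable (\<lambda>n. hh k (n + 1))"
    "\<bar>\<Sum>n. hh k (n + 1)\<bar> \<le> (a * real k + 1) / real k * harm k"
proof -
  have kp: "real k > 0" using k1 by simp
  define c where "c = (a * real k + 1) / real k"
  have tel: "(\<lambda>n. c * (1 / real (n + 1) - 1 / real (n + 1 + k))) sums (c * harm k)"
    using sums_mult[OF inv_tel[of k], of c] unfolding harm_altdef by (simp add: divide_inverse)
  have b: "\<bar>hh k (n + 1)\<bar> \<le> c * (1 / real (n + 1) - 1 / real (n + 1 + k))" for n
  proof -
    have e1: "1 / real (n + 1) - 1 / real (n + 1 + k) = real k / (real (n + 1) * real (n + 1 + k))"
      by (simp add: field_simps)
    have g: "\<And>P. c * (real k / P) = (a * real k + 1) / P" unfolding c_def using kp by simp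
    have "c * (1 / real (n + 1) - 1 / real (n + 1 + k)) = (a * real k + 1) / (real (n + 1) * real (n + 1 + k))"
      unfolding e1 by (rule g)
    then show ?thesis using hh_bound[of "n + 1" k] by simp
  qed
  have sa: "summable (\<lambda>n. \<bar>hh k (n + 1)\<bar>)"
  proof (rule summable_comparison_test'[OF sums_summable[OF tel], of 0])
    fix n :: nat show "norm \<bar>hh k (n + 1)\<bar> \<le> c * (1 / real (n + 1) - 1 / real (n + 1 + k))"
      using b[of n] by simp
  qed
  then show "summable (\<lambda>n. hh k (n + 1))" by (rule summable_rabs_cancel)
  have "\<bar>\<Sum>n. hh k (n + 1)\<bar> \<le> (\<Sum>n. \<bar>hh k (n + 1)\<bar>)" by (rule summable_rabs[OF sa])
  also have "\<dots> \<le> (\<Sum>n. c * (1 / real (n + 1) - 1 / real (n + 1 + k)))"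
    by (rule suminf_le[OF b sa sums_summable[OF tel]])
  also have "\<dots> = c * harm k" using tel by (simp add: sums_iff)
  finally show "\<bar>\<Sum>n. hh k (n + 1)\<bar> \<le> (a * real k + 1) / real k * harm k" unfolding c_def .
qed

lemma tt_sums:
  assumes irr: "a \<notin> \<rat>" and k1: "k \<ge> 1"
  shows "(\<lambda>n. tt k (n + 1)) sums (real k * (ln a + 1 - suminf fa) + (\<Sum>i<k. GG (i + 1)) + (\<Sum>n. hh k (n + 1)))"
proof -
  have s1: "(\<lambda>n. real k * (a / beatty a (n + 1) - 1 / real (n + 1))) sums (real k * (ln a + 1 - suminf fa))"
    by (rule sums_mult[OF D_sums[OF irr]])
  have s2: "(\<lambda>n. GG (n + 1) - GG (n + 1 + k)) sums (\<Sum>i<k. GG (i + 1))"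
    using shift_telescope[OF GG_lim, of k] by (simp add: add_ac)
  have s3: "(\<lambda>n. hh k (n + 1)) sums (\<Sum>n. hh k (n + 1))"
    using hh_summable_bound(1)[OF k1] by (simp add: summable_sums)
  have "(\<lambda>n. real k * (a / beatty a (n + 1) - 1 / real (n + 1)) + (GG (n + 1) - GG (n + 1 + k)) + hh k (n + 1))
      sums (real k * (ln a + 1 - suminf fa) + (\<Sum>i<k. GG (i + 1)) + (\<Sum>n. hh k (n + 1)))"
    by (intro sums_add s1 s2 s3)
  moreover have "tt k (n + 1) = real k * (a / beatty a (n + 1) - 1 / real (n + 1)) + (GG (n + 1) - GG (n + 1 + k)) + hh k (n + 1)" for n
    using tt_split[of "n + 1" k] by simp
  ultimately show ?thesis by simp
qed

lemma tt_main:
  assumes irr: "a \<notin> \<rat>"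
  shows "\<forall>k\<ge>1. summable (\<lambda>n. tt k (n + 1))"
    "(\<lambda>k. (1 / real k) * (\<Sum>n. tt k (n + 1))) \<longlonglongrightarrow> ln a + 1 - suminf fa"
proof -
  show "\<forall>k\<ge>1. summable (\<lambda>n. tt k (n + 1))" using tt_sums[OF irr] sums_summable by blast
  define Dv where "Dv = ln a + 1 - suminf fa"
  have "(\<lambda>k. (1 / real k) * (\<Sum>n. tt k (n + 1)) - Dv) \<longlonglongrightarrow> 0"
  proof (rule Lim_null_comparison)
    show "eventually (\<lambda>k. norm ((1 / real k) * (\<Sum>n. tt k (n + 1)) - Dv) \<le> (a + 2) * (harm k / real k)) sequentially"
    proof (rule eventually_sequentiallyI[of 1])
      fix k :: nat assume k1: "k \<ge> 1"
      have kp: "real k > 0" using k1 by simp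
      have su: "(\<Sum>n. tt k (n + 1)) = real k * Dv + (\<Sum>i<k. GG (i + 1)) + (\<Sum>n. hh k (n + 1))"
        using tt_sums[OF irr k1] unfolding Dv_def by (simp add: sums_iff)
      define SG where "SG = (\<Sum>i<k. GG (i + 1))"
      define SH where "SH = (\<Sum>n. hh k (n + 1))"
      have g0: "0 \<le> SG" unfolding SG_def using GG_bounds(1) by (intro sum_nonneg) auto
      have g1: "SG \<le> harm k" unfolding SG_def harm_altdef
      proof (rule sum_mono)
        fix i assume "i \<in> {..<k}"
        show "GG (i + 1) \<le> inverse (real (Suc i))" using GG_bounds(2)[of "Suc i"] by (simp add: divide_inverse)
      qed
      have h1: "\<bar>SH\<bar> \<le> (a * real k + 1) / real k * harm k" unfolding SH_def by (rule hh_summable_bound(2)[OF k1])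
      have hk: "(a * real k + 1) / real k \<le> a + 1" using kp by (simp add: field_simps)
      have hp: "harm k \<ge> (0::real)" by (rule harm_nonneg)
      have h2: "\<bar>SH\<bar> \<le> (a + 1) * harm k" using h1 mult_right_mono[OF hk hp] by linarith
      have "(1 / real k) * (\<Sum>n. tt k (n + 1)) - Dv = (SG + SH) / real k"
        unfolding su SG_def[symmetric] SH_def[symmetric] using kp by (simp add: field_simps)
      also have "norm \<dots> = \<bar>SG + SH\<bar> / real k" using kp by simp
      also have "\<dots> \<le> (harm k + (a + 1) * harm k) / real k"
        using g0 g1 h2 kp by (intro divide_right_mono) auto
      also have "\<dots> = (a + 2) * (harm k / real k)" by (simp add: field_simps)
      finally show "norm ((1 / real k) * (\<Sum>n. tt k (n + 1)) - Dv) \<le> (a + 2) * (harm k / real k)" .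
    qed
    show "(\<lambda>k. (a + 2) * (harm k / real k)) \<longlonglongrightarrow> 0"
      using tendsto_mult[OF tendsto_const harm_over_n, of "a + 2"] by simp
  qed
  then show "(\<lambda>k. (1 / real k) * (\<Sum>n. tt k (n + 1))) \<longlonglongrightarrow> ln a + 1 - suminf fa"
    unfolding Dv_def by (rule LIM_zero_cancel)
qed

end

theorem mainTheorem1:
  fixes a b :: real
  assumes "a > 1" and "b > 1" and "a \<notin> \<rat>" and "b \<notin> \<rat>"
  shows "(\<forall>k\<ge>1. summable (\<lambda>n. ratio_term a b k (n + 1)))
       \<and> summable (\<lambda>n. frac_term a b (n + 1))
       \<and> ((\<lambda>k. (1 / real k) * (\<Sum>n. ratio_term a b k (n + 1))) \<longlongrightarrow>
            ln (a / b) - (\<Sum>n. frac_term a b (n + 1))) sequentially"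
proof -
  have rt: "ratio_term a b k n = tt a k n - tt b k n" for k n
    unfolding ratio_term_def tt_def[OF assms(1)] tt_def[OF assms(2)] by simp
  have ft: "frac_term a b (n + 1) = fa a n - fa b n" for n
    unfolding frac_term_def fa_def[OF assms(1)] fa_def[OF assms(2)] by (simp add: diff_divide_distrib)
  have A1: "\<forall>k\<ge>1. summable (\<lambda>n. tt a k (n + 1))" by (rule tt_main(1)[OF assms(1) assms(3)])
  have B1: "\<forall>k\<ge>1. summable (\<lambda>n. tt b k (n + 1))" by (rule tt_main(1)[OF assms(2) assms(4)])
  have A2: "(\<lambda>k. (1 / real k) * (\<Sum>n. tt a k (n + 1))) \<longlonglongrightarrow> ln a + 1 - suminf (fa a)"
    by (rule tt_main(2)[OF assms(1) assms(3)])
  have B2: "(\<lambda>k. (1 / real k) * (\<Sum>n. tt b k (n + 1))) \<longlonglongrightarrow> ln b + 1 - suminf (fa b)"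
    by (rule tt_main(2)[OF assms(2) assms(4)])
  have fsa: "summable (fa a)" by (rule fa_summable[OF assms(1)])
  have fsb: "summable (fa b)" by (rule fa_summable[OF assms(2)])
  have S1: "\<forall>k\<ge>1. summable (\<lambda>n. ratio_term a b k (n + 1))"
    unfolding rt using A1 B1 by (auto intro: summable_diff)
  have S2: "summable (\<lambda>n. frac_term a b (n + 1))"
    unfolding ft using fsa fsb by (rule summable_diff)
  have F: "(\<Sum>n. frac_term a b (n + 1)) = suminf (fa a) - suminf (fa b)"
    unfolding ft using suminf_diff[OF fsa fsb] by simp
  have ev: "eventually (\<lambda>k. (1 / real k) * (\<Sum>n. tt a k (n + 1)) - (1 / real k) * (\<Sum>n. tt b k (n + 1))
        = (1 / real k) * (\<Sum>n. ratio_term a b k (n + 1))) sequentially"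
  proof (rule eventually_sequentiallyI[of 1])
    fix k :: nat assume k: "k \<ge> 1"
    have "(\<Sum>n. ratio_term a b k (n + 1)) = (\<Sum>n. tt a k (n + 1)) - (\<Sum>n. tt b k (n + 1))"
      unfolding rt using suminf_diff[of "\<lambda>n. tt a k (n + 1)" "\<lambda>n. tt b k (n + 1)"] A1 B1 k by simp
    then show "(1 / real k) * (\<Sum>n. tt a k (n + 1)) - (1 / real k) * (\<Sum>n. tt b k (n + 1))
        = (1 / real k) * (\<Sum>n. ratio_term a b k (n + 1))" by (simp add: right_diff_distrib)
  qed
  have "(\<lambda>k. (1 / real k) * (\<Sum>n. tt a k (n + 1)) - (1 / real k) * (\<Sum>n. tt b k (n + 1)))
     \<longlonglongrightarrow> (ln a + 1 - suminf (fa a)) - (ln b + 1 - suminf (fa b))"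
    by (rule tendsto_diff[OF A2 B2])
  moreover have "(ln a + 1 - suminf (fa a)) - (ln b + 1 - suminf (fa b)) = ln (a / b) - (\<Sum>n. frac_term a b (n + 1))"
    unfolding F using assms(1,2) by (simp add: ln_div)
  ultimately have "(\<lambda>k. (1 / real k) * (\<Sum>n. tt a k (n + 1)) - (1 / real k) * (\<Sum>n. tt b k (n + 1)))
     \<longlonglongrightarrow> ln (a / b) - (\<Sum>n. frac_term a b (n + 1))" by simp
  then have S3: "(\<lambda>k. (1 / real k) * (\<Sum>n. ratio_term a b k (n + 1))) \<longlonglongrightarrow> ln (a / b) - (\<Sum>n. frac_term a b (n + 1))"
    by (rule Lim_transform_eventually[OF _ ev])
  show ?thesis using S1 S2 S3 by blast
qed

end
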